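(* Suppose exclusion, random assignment and consistency hold, and let $\mathcal P$ be the induced observed law. Then for every $y'\in\{0,\dots,n-2\}$, every $j'\in[\ell]$ and every non-constant $(j_0,\dots,j_{n-1})\in([\ell]\setminus\{j'\})^n$, $$p_{y'1,j'}\le\sum_{j\in\{j_0,\dots,j_{n-1}\}}p_{y'1,j}+\sum_{y=0}^{n-1}p_{y0,j_y},$$ where the first sum runs over the set of distinct values among $j_0,\dots,j_{n-1}$. Moreover, none of these inequalities is implied by the others (for each one there is an observed law satisfying all the other inequalities of this family but violating it), and their total number is $(n-1)\ell\big((\ell-1)^n-(\ell-1)\big)$.
   Context: $D\in\{0,1\}$ treatment; $Y$ outcome with values $\gamma_0<\dots<\gamma_{n-1}$; instrument $Z$ with values in $[\ell]=\{0,\dots,\ell-1\}$, $\mathcal P(Z=z)>0$; $[n]=\{0,\dots,n-1\}$. Potential outcomes $Y^{(d,z)}$, potential treatments $D^{(z)}$. Exclusion: $Y^{(d,z)}=Y^{(d,z')}$ a.s. for all $z,z',d$ (written $Y^{(d)}$). Random assignment: $Z\perp(Y^{(0)},Y^{(1)},D^{(0)},\dots,D^{(\ell-1)})$. Consistency: $Y=(1-D)Y^{(0)}+DY^{(1)}$, $D=\sum_z\mathbb 1(Z=z)D^{(z)}$. $p_{yd,z}=\mathcal P(Y=\gamma_y,D=d\mid Z=z)$. A tuple is non-constant if not all entries are equal. *)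

theory Defs
  imports "HOL-Probability.Probability"
begin

definition obs_law_of :: "'a measure \<Rightarrow> ('a \<Rightarrow> real) \<Rightarrow> ('a \<Rightarrow> nat) \<Rightarrow> ('a \<Rightarrow> nat)
    \<Rightarrow> (nat \<Rightarrow> real) \<Rightarrow> nat \<Rightarrow> nat \<Rightarrow> nat \<Rightarrow> real" where
  "obs_law_of M Y D Z g y d z =
     measure M {\<omega> \<in> space M. Y \<omega> = g y \<and> D \<omega> = d \<and> Z \<omega> = z}
     / measure M {\<omega> \<in> space M. Z \<omega> = z}"

definition nonconstant :: "nat list \<Rightarrow> bool" where
  "nonconstant js \<longleftrightarrow> (\<exists>i<length js. \<exists>k<length js. js ! i \<noteq> js ! k)"

text \<open>The inequality indexed by (y', j', js) for an observed law p (p y d z = p_{yd,z}).\<close>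
definition iv_ineq :: "nat \<Rightarrow> (nat \<Rightarrow> nat \<Rightarrow> nat \<Rightarrow> real) \<Rightarrow> nat \<times> nat \<times> nat list \<Rightarrow> bool" where
  "iv_ineq n p idx = (case idx of (y', j', js) \<Rightarrow>
     p y' 1 j' \<le> (\<Sum>j\<in>set js. p y' 1 j) + (\<Sum>y<n. p y 0 (js ! y)))"

definition iv_family :: "nat \<Rightarrow> nat \<Rightarrow> (nat \<times> nat \<times> nat list) set" where
  "iv_family n l = {(y', j', js). y' + 2 \<le> n \<and> j' < l \<and> length js = n
      \<and> set js \<subseteq> {..<l} - {j'} \<and> nonconstant js}"

definition obs_law :: "nat \<Rightarrow> nat \<Rightarrow> (nat \<Rightarrow> nat \<Rightarrow> nat \<Rightarrow> real) \<Rightarrow> bool" where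
  "obs_law n l p \<longleftrightarrow> (\<forall>z<l. (\<forall>y<n. \<forall>d<2. 0 \<le> p y d z) \<and> (\<Sum>y<n. \<Sum>d<2. p y d z) = 1)"

end

theory Submission
  imports Defs
begin


lemma not_nonconstant_iff:
  assumes "length xs = n" "n \<ge> 1"
  shows "\<not> nonconstant xs \<longleftrightarrow> (\<exists>a. xs = replicate n a)"
proof
  assume "\<not> nonconstant xs"
  then have h: "\<forall>i<n. \<forall>k<n. xs ! i = xs ! k" using assms(1) unfolding nonconstant_def by blast
  have "xs = replicate n (xs ! 0)"
  proof (rule nth_equalityI)
    show "length xs = length (replicate n (xs ! 0))" using assms(1) by simp
    fix i assume "i < length xs"
    then have "i < n" using assms(1) by simp
    moreover have "0 < n" using assms(2) by simp
    ultimately have "xs ! i = xs ! 0" using h by blast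
    then show "xs ! i = replicate n (xs ! 0) ! i" using \<open>i < n\<close> by simp
  qed
  then show "\<exists>a. xs = replicate n a" by blast
next
  assume "\<exists>a. xs = replicate n a"
  then obtain a where "xs = replicate n a" by blast
  then show "\<not> nonconstant xs" unfolding nonconstant_def by simp
qed

lemma card_nonconst:
  assumes "finite A" "n \<ge> 1"
  shows "card {xs. length xs = n \<and> set xs \<subseteq> A \<and> nonconstant xs} = card A ^ n - card A"
proof -
  let ?All = "{xs. set xs \<subseteq> A \<and> length xs = n}"
  let ?C = "(\<lambda>a. replicate n a) ` A"
  have eq: "{xs. length xs = n \<and> set xs \<subseteq> A \<and> nonconstant xs} = ?All - ?C"
  proof (rule set_eqI)
    fix xs
    have "xs \<in> ?C" if h: "length xs = n" "set xs \<subseteq> A" "\<not> nonconstant xs"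
    proof -
      obtain a where a: "xs = replicate n a" using not_nonconstant_iff[of xs n] h assms by auto
      then have "a \<in> set xs" using assms by simp
      then show ?thesis using a h by auto
    qed
    moreover have "\<not> nonconstant xs" if h: "xs \<in> ?C"
    proof -
      obtain a where "xs = replicate n a" using h by blast
      then show ?thesis using not_nonconstant_iff[of xs n] assms by simp
    qed
    ultimately show "xs \<in> {xs. length xs = n \<and> set xs \<subseteq> A \<and> nonconstant xs} \<longleftrightarrow> xs \<in> ?All - ?C"
      by blast
  qed
  have sub: "?C \<subseteq> ?All" using assms by auto
  have inj: "inj_on (\<lambda>a. replicate n a) A"
    using assms by (auto simp: inj_on_def)
  have "card (?All - ?C) = card ?All - card ?C"
    by (rule card_Diff_subset) (use assms sub finite_lists_length_eq in auto)
  also have "card ?C = card A" using card_image[OF inj] .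
  finally show ?thesis using eq card_lists_length_eq[OF assms(1)] by simp
qed

lemma sum_const2: "(\<Sum>y'<a. \<Sum>j'<b. (c::nat)) = a * b * c"
  by simp

lemma family_card:
  "card (iv_family n l) = (n - 1) * l * ((l - 1) ^ n - (l - 1))"
proof (cases "n \<ge> 2")
  case False
  then have "iv_family n l = {}" unfolding iv_family_def by auto
  moreover have "n - 1 = 0" using False by simp
  ultimately show ?thesis by (simp only: card.empty mult_0)
next
  case True
  let ?c = "(l - 1) ^ n - (l - 1)"
  define L where "L j' = {js. length js = n \<and> set js \<subseteq> {..<l} - {j'} \<and> nonconstant js}" for j'
  have eq: "iv_family n l = (SIGMA y':{..<n-1}. SIGMA j':{..<l}. L j')"
    unfolding iv_family_def L_def by auto
  have cL: "card (L j') = ?c" if "j' < l" for j'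
    unfolding L_def using card_nonconst[of "{..<l} - {j'}" n] True that by simp
  have finL: "finite (L j')" for j'
    unfolding L_def
    by (rule finite_subset[OF _ finite_lists_length_eq[of "{..<l} - {j'}" n]]) auto
  have "card (iv_family n l) = (\<Sum>y'<n-1. \<Sum>j'<l. card (L j'))"
    unfolding eq by (simp add: card_SigmaI finL)
  also have "\<dots> = (\<Sum>y'<n-1. \<Sum>j'<l. ?c)"
    by (rule sum.cong[OF refl], rule sum.cong[OF refl], rule cL) simp
  also have "\<dots> = (n - 1) * l * ?c"
    by (rule sum_const2)
  finally show ?thesis .
qed



lemma sum2: "(\<Sum>d<(2::nat). f d) = f 0 + (f 1 :: real)"
  by (simp add: numeral_2_eq_2)

lemma part2:
  assumes "i \<in> iv_family n l"
  shows "\<exists>p. obs_law n l p \<and> \<not> iv_ineq n p i \<and> (\<forall>k \<in> iv_family n l - {i}. iv_ineq n p k)"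
proof -
  obtain y' j' js where i: "i = (y', j', js)" by (cases i) auto
  from assms have fam: "y' + 2 \<le> n" "j' < l" "length js = n" "set js \<subseteq> {..<l} - {j'}" "nonconstant js"
    unfolding iv_family_def i by auto
  define T where "T z = {u. u < n \<and> js ! u \<noteq> z}" for z
  define p where "p y d z = (if z = j' then (if y < n \<and> d = (if y = y' then 1 else 0) then 1 / real n else 0)
       else (if d = 0 \<and> y < n \<and> js ! y \<noteq> z then 1 / real (card (T z)) else 0))" for y d z :: nat
  have Tne: "T z \<noteq> {}" for z
  proof -
    obtain a b where ab: "a < n" "b < n" "js ! a \<noteq> js ! b"
      using fam(3,5) unfolding nonconstant_def by auto
    then show ?thesis unfolding T_def by (cases "js ! a = z") auto
  qed
  have Tfin: "finite (T z)" for z unfolding T_def by auto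
  have Tle: "card (T z) \<le> n" for z
  proof -
    have "T z \<subseteq> {..<n}" unfolding T_def by auto
    then show ?thesis using card_mono[of "{..<n}" "T z"] by simp
  qed
  have Tpos: "card (T z) > 0" for z using Tne Tfin by (simp add: card_gt_0_iff)
  have npos: "n > 0" using fam(1) by simp
  have pnn: "p y d z \<ge> 0" for y d z by (simp add: p_def)
  have obs: "obs_law n l p"
    unfolding obs_law_def
  proof (intro allI impI)
    fix z assume "z < l"
    have A: "\<forall>y<n. \<forall>d<2. 0 \<le> p y d z" using pnn by simp
    have B: "(\<Sum>y<n. \<Sum>d<2. p y d z) = 1"
    proof (cases "z = j'")
      case True
      have "(\<Sum>d<2. p y d z) = 1 / real n" if "y < n" for y
        unfolding sum2 using that True by (simp add: p_def)
      then have "(\<Sum>y<n. \<Sum>d<2. p y d z) = (\<Sum>y<n. 1 / real n)" by simp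
      also have "\<dots> = 1" using npos by simp
      finally show ?thesis .
    next
      case False
      have "(\<Sum>d<2. p y d z) = (if y \<in> T z then 1 / real (card (T z)) else 0)" if "y < n" for y
        unfolding sum2 using that False by (simp add: p_def T_def)
      then have "(\<Sum>y<n. \<Sum>d<2. p y d z) = (\<Sum>y<n. if y \<in> T z then 1 / real (card (T z)) else 0)"
        by simp
      also have "\<dots> = (\<Sum>y\<in>{..<n} \<inter> T z. 1 / real (card (T z)))"
        by (rule sum.inter_restrict[symmetric]) simp
      also have "{..<n} \<inter> T z = T z" unfolding T_def by auto
      also have "(\<Sum>y\<in>T z. 1 / real (card (T z))) = 1" using Tpos by simp
      finally show ?thesis .
    qed
    show "(\<forall>y<n. \<forall>d<2. 0 \<le> p y d z) \<and> (\<Sum>y<n. \<Sum>d<2. p y d z) = 1" using A B by blast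
  qed
  have viol: "\<not> iv_ineq n p i"
  proof -
    have s1: "(\<Sum>j\<in>set js. p y' 1 j) = 0"
      by (rule sum.neutral) (use fam(4) in \<open>auto simp: p_def\<close>)
    have s2: "(\<Sum>y<n. p y 0 (js ! y)) = 0"
    proof (rule sum.neutral, intro ballI)
      fix y assume "y \<in> {..<n}"
      then have "js ! y \<in> set js" using fam(3) by simp
      then have "js ! y \<noteq> j'" using fam(4) by auto
      then show "p y 0 (js ! y) = 0" by (simp add: p_def)
    qed
    have "p y' 1 j' = 1 / real n" using fam(1) by (simp add: p_def)
    then show ?thesis unfolding iv_ineq_def i using s1 s2 npos by simp
  qed
  have others: "iv_ineq n p k" if k: "k \<in> iv_family n l - {i}" for k
  proof -
    obtain y'' j'' ks where kk: "k = (y'', j'', ks)" by (cases k) auto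
    from k have famk: "y'' + 2 \<le> n" "j'' < l" "length ks = n" "set ks \<subseteq> {..<l} - {j''}" "k \<noteq> i"
      unfolding iv_family_def kk by auto
    have R1: "(\<Sum>j\<in>set ks. p y'' 1 j) \<ge> 0" by (rule sum_nonneg) (use pnn in auto)
    have R2: "(\<Sum>y<n. p y 0 (ks ! y)) \<ge> 0" by (rule sum_nonneg) (use pnn in auto)
    show ?thesis
    proof (cases "j'' = j' \<and> y'' = y'")
      case False
      then have "p y'' 1 j'' = 0" by (auto simp: p_def)
      then show ?thesis unfolding iv_ineq_def kk using R1 R2 by simp
    next
      case True
      then have "ks \<noteq> js" using famk(5) unfolding kk i by auto
      then obtain u where u: "u < n" "ks ! u \<noteq> js ! u"
        using famk(3) fam(3) nth_equalityI[of ks js] by auto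
      have "ks ! u \<in> set ks" using u famk(3) by simp
      then have "ks ! u \<noteq> j'" using famk(4) True by auto
      then have pu: "p u 0 (ks ! u) = 1 / real (card (T (ks ! u)))" using u by (simp add: p_def)
      have "1 / real n \<le> 1 / real (card (T (ks ! u)))"
        using Tle[of "ks ! u"] Tpos[of "ks ! u"] by (simp add: frac_le)
      also have "\<dots> \<le> (\<Sum>y<n. p y 0 (ks ! y))"
        unfolding pu[symmetric] by (rule member_le_sum) (use pnn u in auto)
      finally have "1 / real n \<le> (\<Sum>y<n. p y 0 (ks ! y))" .
      moreover have "p y'' 1 j'' = 1 / real n" using True fam(1) by (simp add: p_def)
      ultimately show ?thesis unfolding iv_ineq_def kk using R1 by simp
    qed
  qed
  show ?thesis using obs viol others by blast
qed



lemma sum_indicator_nat: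
  assumes "a < (l::nat)"
  shows "(\<Sum>z<l. (if a = z then 1 else 0) * (f z :: nat)) = f a"
proof -
  have "(\<Sum>z<l. (if a = z then 1 else 0) * f z) = (\<Sum>z<l. if a = z then f z else 0)"
    by (rule sum.cong) auto
  also have "\<dots> = f a" using assms by simp
  finally show ?thesis .
qed

lemma (in prob_space) part1:
  fixes Z D :: "'a \<Rightarrow> nat" and Y :: "'a \<Rightarrow> real"
    and YP :: "nat \<Rightarrow> nat \<Rightarrow> 'a \<Rightarrow> real" and DP :: "nat \<Rightarrow> 'a \<Rightarrow> nat"
    and g :: "nat \<Rightarrow> real" and n l :: nat
  assumes Z_meas: "Z \<in> measurable M (count_space UNIV)"
    and D_meas: "D \<in> measurable M (count_space UNIV)"
    and Y_meas: "Y \<in> borel_measurable M"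
    and YP_meas: "\<And>d z. YP d z \<in> borel_measurable M"
    and DP_meas: "\<And>z. DP z \<in> measurable M (count_space UNIV)"
    and Y_vals: "AE \<omega> in M. Y \<omega> \<in> g ` {..<n}"
    and DP_vals: "\<And>z. z < l \<Longrightarrow> AE \<omega> in M. DP z \<omega> \<in> {0, 1}"
    and Z_pos: "\<And>z. z < l \<Longrightarrow> measure M {\<omega> \<in> space M. Z \<omega> = z} > 0"
    and exclusion: "\<And>d z z'. d \<in> {0, 1} \<Longrightarrow> z < l \<Longrightarrow> z' < l \<Longrightarrow>
                      AE \<omega> in M. YP d z \<omega> = YP d z' \<omega>"
    and random_assignment: "indep_set
           {Z -` S \<inter> space M | S. True}
           {(\<lambda>\<omega>. (YP 0 0 \<omega>, YP 1 0 \<omega>, map (\<lambda>z. DP z \<omega>) [0..<l])) -` S \<inter> space M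
              | S. S \<in> sets (borel \<Otimes>\<^sub>M borel \<Otimes>\<^sub>M count_space UNIV)}"
    and consistency_Y: "AE \<omega> in M. Y \<omega> = (1 - real (D \<omega>)) * YP 0 (Z \<omega>) \<omega> + real (D \<omega>) * YP 1 (Z \<omega>) \<omega>"
    and consistency_D: "AE \<omega> in M. D \<omega> = (\<Sum>z<l. (if Z \<omega> = z then 1 else 0) * DP z \<omega>)"
    and fam: "(y', j', js) \<in> iv_family n l"
  shows "iv_ineq n (obs_law_of M Y D Z g) (y', j', js)"
proof -
  note [measurable] = Z_meas D_meas Y_meas YP_meas DP_meas
  from fam have f1: "y' + 2 \<le> n" and f2: "j' < l" and f3: "length js = n"
    and f4: "set js \<subseteq> {..<l} - {j'}"
    unfolding iv_family_def by auto
  define T where "T \<omega> = (YP 0 0 \<omega>, YP 1 0 \<omega>, map (\<lambda>z. DP z \<omega>) [0..<l])" for \<omega>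
  define G where "G y d z = {\<omega>\<in>space M. YP d 0 \<omega> = g y \<and> DP z \<omega> = d}" for y d z
  define Ez where "Ez z = {\<omega>\<in>space M. Z \<omega> = z}" for z
  have G_ev: "G y d z \<in> events" for y d z unfolding G_def by measurable
  have Ez_ev: "Ez z \<in> events" for z unfolding Ez_def by measurable
  have indA: "Ez z \<in> {Z -` S \<inter> space M | S. True}" for z
    unfolding Ez_def by (rule CollectI, rule exI[of _ "{z}"]) auto
  have spc: "space (borel \<Otimes>\<^sub>M borel \<Otimes>\<^sub>M count_space UNIV) = (UNIV :: (real \<times> real \<times> nat list) set)"
    by (simp add: space_pair_measure)
  have indB: "T -` S \<inter> space M \<in> {T -` S \<inter> space M | S. S \<in> sets (borel \<Otimes>\<^sub>M borel \<Otimes>\<^sub>M count_space UNIV)}"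
    if "S \<in> sets (borel \<Otimes>\<^sub>M borel \<Otimes>\<^sub>M count_space UNIV)" for S
    using that by blast
  have indep: "prob (Ez z \<inter> (T -` S \<inter> space M)) = prob (Ez z) * prob (T -` S \<inter> space M)"
    if "S \<in> sets (borel \<Otimes>\<^sub>M borel \<Otimes>\<^sub>M count_space UNIV)" for z S
    using indep_setD[OF random_assignment indA[of z]] indB[OF that] unfolding T_def by simp
  have GT: "G y d z = T -` {x. (if d = 0 then fst x else fst (snd x)) = g y \<and> snd (snd x) ! z = d} \<inter> space M"
    if "z < l" "d \<in> {0, 1}" for y d z
    using that unfolding G_def T_def by auto
  have GS: "{x :: real \<times> real \<times> nat list. (if d = 0 then fst x else fst (snd x)) = g y \<and> snd (snd x) ! z = d}
      \<in> sets (borel \<Otimes>\<^sub>M borel \<Otimes>\<^sub>M count_space UNIV)" for y d z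
  proof -
    have "{x \<in> space (borel \<Otimes>\<^sub>M borel \<Otimes>\<^sub>M count_space UNIV).
        (if d = 0 then fst x else fst (snd x)) = g y \<and> snd (snd x) ! z = d}
      \<in> sets (borel \<Otimes>\<^sub>M borel \<Otimes>\<^sub>M count_space (UNIV :: nat list set))"
      by measurable
    then show ?thesis unfolding spc by simp
  qed
  have indG: "prob (Ez z \<inter> G y d z) = prob (Ez z) * prob (G y d z)" if "z < l" "d \<in> {0, 1}" for y d z
    unfolding GT[OF that] by (rule indep[OF GS])
  have Dz: "D \<omega> = DP z \<omega>" if "Z \<omega> = z" "z < l"
      "D \<omega> = (\<Sum>z<l. (if Z \<omega> = z then 1 else 0) * DP z \<omega>)" for \<omega> z
    using that sum_indicator_nat[of z l "\<lambda>z. DP z \<omega>"] by simp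
  have conv: "obs_law_of M Y D Z g y d z = prob (G y d z)" if d: "d \<in> {0, 1}" and z: "z < l" for y d z
  proof -
    define E where "E = {\<omega> \<in> space M. Y \<omega> = g y \<and> D \<omega> = d \<and> Z \<omega> = z}"
    have E_ev: "E \<in> events" unfolding E_def by measurable
    have l0: "0 < l" using z by simp
    have "AE \<omega> in M. \<omega> \<in> E \<longleftrightarrow> \<omega> \<in> Ez z \<inter> G y d z"
      using consistency_Y consistency_D exclusion[OF d z l0]
    proof eventually_elim
      case (elim \<omega>)
      show ?case
      proof (cases "\<omega> \<in> space M \<and> Z \<omega> = z")
        case False
        then show ?thesis unfolding E_def Ez_def G_def by auto
      next
        case True
        then have DD: "D \<omega> = DP z \<omega>" using Dz[of \<omega> z] elim z by simp
        have YY: "D \<omega> = d \<Longrightarrow> Y \<omega> = YP d 0 \<omega>"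
          using elim(1,3) True d by auto
        show ?thesis using True DD YY unfolding E_def Ez_def G_def by auto
      qed
    qed
    then have "prob E = prob (Ez z \<inter> G y d z)"
      by (rule finite_measure_eq_AE) (use E_ev Ez_ev G_ev in auto)
    also have "\<dots> = prob (Ez z) * prob (G y d z)" by (rule indG[OF z d])
    finally have "prob E = prob (Ez z) * prob (G y d z)" .
    moreover have "prob (Ez z) > 0" using Z_pos[OF z] unfolding Ez_def by simp
    ultimately show ?thesis unfolding obs_law_of_def E_def[symmetric] Ez_def[symmetric] by simp
  qed
  have n0: "0 < n" using f1 by simp
  define j0 where "j0 = js ! 0"
  have j0_in: "j0 \<in> set js" unfolding j0_def using f3 n0 by simp
  have j0l: "j0 < l" using j0_in f4 by auto
  define B where "B = {\<omega>\<in>space M. DP j0 \<omega> = 0 \<and> (\<forall>y\<in>{..<n}. YP 0 0 \<omega> \<noteq> g y)}"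
  have B_ev: "B \<in> events" unfolding B_def by measurable
  have BS: "{x :: real \<times> real \<times> nat list. snd (snd x) ! j0 = 0 \<and> (\<forall>y\<in>{..<n}. fst x \<noteq> g y)}
      \<in> sets (borel \<Otimes>\<^sub>M borel \<Otimes>\<^sub>M count_space UNIV)" (is "?S \<in> sets ?N")
  proof -
    have "{x \<in> space ?N. snd (snd x) ! j0 = 0 \<and> (\<forall>y\<in>{..<n}. fst x \<noteq> g y)} \<in> sets ?N"
      by measurable
    moreover have "{x \<in> space ?N. snd (snd x) ! j0 = 0 \<and> (\<forall>y\<in>{..<n}. fst x \<noteq> g y)} = ?S"
      using spc by blast
    ultimately show ?thesis by simp
  qed
  have BT: "B = T -` {x. snd (snd x) ! j0 = 0 \<and> (\<forall>y\<in>{..<n}. fst x \<noteq> g y)} \<inter> space M"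
    using j0l unfolding B_def T_def by auto
  have indBz: "prob (Ez j0 \<inter> B) = prob (Ez j0) * prob B"
    unfolding BT by (rule indep[OF BS])
  have l0: "0 < l" using j0l by simp
  have d0: "(0::nat) \<in> {0, 1}" by simp
  have "AE \<omega> in M. \<omega> \<in> Ez j0 \<inter> B \<longleftrightarrow> \<omega> \<in> {}"
    using consistency_Y consistency_D exclusion[of 0 j0 0, OF d0 j0l l0] Y_vals
  proof eventually_elim
    case (elim \<omega>)
    show ?case
    proof (cases "\<omega> \<in> space M \<and> Z \<omega> = j0 \<and> DP j0 \<omega> = 0")
      case False
      then show ?thesis unfolding Ez_def B_def by auto
    next
      case True
      then have "D \<omega> = 0" using Dz[of \<omega> j0] elim j0l by simp
      then have "Y \<omega> = YP 0 0 \<omega>" using elim(1,3) True by simp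
      then have "YP 0 0 \<omega> \<in> g ` {..<n}" using elim(4) by simp
      then show ?thesis unfolding B_def by auto
    qed
  qed
  then have "prob (Ez j0 \<inter> B) = prob {}"
    by (rule finite_measure_eq_AE) (use Ez_ev B_ev in auto)
  then have "prob (Ez j0) * prob B = 0" using indBz by simp
  moreover have "prob (Ez j0) > 0" using Z_pos[OF j0l] unfolding Ez_def by simp
  ultimately have pB: "prob B = 0" by simp
  have "B \<in> null_sets M" using B_ev pB by (simp add: null_sets_def emeasure_eq_measure)
  then have AEB: "AE \<omega> in M. \<omega> \<notin> B" by (rule AE_not_in)
  have AEJ: "AE \<omega> in M. \<forall>j\<in>set js. DP j \<omega> \<in> {0, 1}"
    by (rule AE_finite_allI) (use f4 DP_vals in auto)
  define U1 where "U1 = (\<Union>j\<in>set js. G y' 1 j)"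
  define U2 where "U2 = (\<Union>y\<in>{..<n}. G y 0 (js ! y))"
  have U1_ev: "U1 \<in> events" unfolding U1_def using G_ev by auto
  have U2_ev: "U2 \<in> events" unfolding U2_def using G_ev by auto
  have "AE \<omega> in M. \<omega> \<in> G y' 1 j' \<longrightarrow> \<omega> \<in> U1 \<union> U2"
    using AEB AEJ
  proof eventually_elim
    case (elim \<omega>)
    show ?case
    proof
      assume g1: "\<omega> \<in> G y' 1 j'"
      show "\<omega> \<in> U1 \<union> U2"
      proof (cases "\<exists>j\<in>set js. DP j \<omega> = 1")
        case True
        then show ?thesis using g1 unfolding U1_def G_def by auto
      next
        case False
        then have all0: "\<forall>j\<in>set js. DP j \<omega> = 0" using elim(2) by auto
        then have "DP j0 \<omega> = 0" using j0_in by simp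
        moreover have "\<omega> \<in> space M" using g1 unfolding G_def by simp
        ultimately obtain y where y: "y < n" "YP 0 0 \<omega> = g y"
          using elim(1) unfolding B_def by auto
        have "js ! y \<in> set js" using y f3 by simp
        then have "DP (js ! y) \<omega> = 0" using all0 by simp
        then have "\<omega> \<in> G y 0 (js ! y)" using y \<open>\<omega> \<in> space M\<close> unfolding G_def by simp
        then show ?thesis unfolding U2_def using y by auto
      qed
    qed
  qed
  then have "prob (G y' 1 j') \<le> prob (U1 \<union> U2)"
    by (rule finite_measure_mono_AE) (use U1_ev U2_ev in auto)
  also have "\<dots> \<le> prob U1 + prob U2"
    by (rule measure_subadditive) (use U1_ev U2_ev emeasure_finite in auto)
  also have "prob U1 \<le> (\<Sum>j\<in>set js. prob (G y' 1 j))"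
    unfolding U1_def by (rule finite_measure_subadditive_finite) (use G_ev in auto)
  also have "prob U2 \<le> (\<Sum>y<n. prob (G y 0 (js ! y)))"
    unfolding U2_def by (rule finite_measure_subadditive_finite) (use G_ev in auto)
  finally have main: "prob (G y' 1 j') \<le> (\<Sum>j\<in>set js. prob (G y' 1 j)) + (\<Sum>y<n. prob (G y 0 (js ! y)))"
    by simp
  have c1: "obs_law_of M Y D Z g y' 1 j' = prob (G y' 1 j')" using conv f2 by simp
  have c2: "(\<Sum>j\<in>set js. obs_law_of M Y D Z g y' 1 j) = (\<Sum>j\<in>set js. prob (G y' 1 j))"
    by (rule sum.cong[OF refl], rule conv) (use f4 in auto)
  have c3: "(\<Sum>y<n. obs_law_of M Y D Z g y 0 (js ! y)) = (\<Sum>y<n. prob (G y 0 (js ! y)))"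
  proof (rule sum.cong[OF refl], rule conv)
    fix y assume "y \<in> {..<n}"
    then have "js ! y \<in> set js" using f3 by simp
    then show "js ! y < l" using f4 by auto
  qed simp
  show ?thesis unfolding iv_ineq_def using main c1 c2 c3 by simp
qed


theorem theorem6:
  fixes M :: "'a measure"
    and Z D :: "'a \<Rightarrow> nat" and Y :: "'a \<Rightarrow> real"
    and YP :: "nat \<Rightarrow> nat \<Rightarrow> 'a \<Rightarrow> real"  \<comment> \<open>YP d z = Y^(d,z)\<close>
    and DP :: "nat \<Rightarrow> 'a \<Rightarrow> nat"                \<comment> \<open>DP z = D^(z)\<close>
    and g :: "nat \<Rightarrow> real" and n l :: nat
  assumes prob: "prob_space M"
    and Z_meas: "Z \<in> measurable M (count_space UNIV)"
    and D_meas: "D \<in> measurable M (count_space UNIV)"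
    and Y_meas: "Y \<in> borel_measurable M"
    and YP_meas: "\<And>d z. YP d z \<in> borel_measurable M"
    and DP_meas: "\<And>z. DP z \<in> measurable M (count_space UNIV)"
    and g_mono: "strict_mono_on {..<n} g"
    and Y_vals: "AE \<omega> in M. Y \<omega> \<in> g ` {..<n}"
    and D_vals: "AE \<omega> in M. D \<omega> \<in> {0, 1}"
    and DP_vals: "\<And>z. z < l \<Longrightarrow> AE \<omega> in M. DP z \<omega> \<in> {0, 1}"
    and Z_vals: "AE \<omega> in M. Z \<omega> < l"
    and Z_pos: "\<And>z. z < l \<Longrightarrow> measure M {\<omega> \<in> space M. Z \<omega> = z} > 0"
    and exclusion: "\<And>d z z'. d \<in> {0, 1} \<Longrightarrow> z < l \<Longrightarrow> z' < l \<Longrightarrow>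
                      AE \<omega> in M. YP d z \<omega> = YP d z' \<omega>"
    and random_assignment: "prob_space.indep_set M
           {Z -` S \<inter> space M | S. True}
           {(\<lambda>\<omega>. (YP 0 0 \<omega>, YP 1 0 \<omega>, map (\<lambda>z. DP z \<omega>) [0..<l])) -` S \<inter> space M
              | S. S \<in> sets (borel \<Otimes>\<^sub>M borel \<Otimes>\<^sub>M count_space UNIV)}"
    and consistency_Y: "AE \<omega> in M. Y \<omega> = (1 - real (D \<omega>)) * YP 0 (Z \<omega>) \<omega> + real (D \<omega>) * YP 1 (Z \<omega>) \<omega>"
    and consistency_D: "AE \<omega> in M. D \<omega> = (\<Sum>z<l. (if Z \<omega> = z then 1 else 0) * DP z \<omega>)"
  shows "(\<forall>i \<in> iv_family n l. iv_ineq n (obs_law_of M Y D Z g) i)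
       \<and> (\<forall>i \<in> iv_family n l. \<exists>p. obs_law n l p \<and> \<not> iv_ineq n p i
             \<and> (\<forall>k \<in> iv_family n l - {i}. iv_ineq n p k))
       \<and> card (iv_family n l) = (n - 1) * l * ((l - 1) ^ n - (l - 1))"
proof -
  interpret prob_space M by (rule prob)
  have A: "\<forall>i \<in> iv_family n l. iv_ineq n (obs_law_of M Y D Z g) i"
  proof
    fix i assume i: "i \<in> iv_family n l"
    obtain y' j' js where ii: "i = (y', j', js)" by (cases i) auto
    show "iv_ineq n (obs_law_of M Y D Z g) i"
      unfolding ii
      by (rule part1[OF Z_meas D_meas Y_meas YP_meas DP_meas Y_vals DP_vals Z_pos exclusion
            random_assignment consistency_Y consistency_D i[unfolded ii]])
  qed
  have B: "\<forall>i \<in> iv_family n l. \<exists>p. obs_law n l p \<and> \<not> iv_ineq n p i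
             \<and> (\<forall>k \<in> iv_family n l - {i}. iv_ineq n p k)"
    using part2 by blast
  show ?thesis using A B family_card by blast
qed

end
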